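(* Let $n\ge 1$ and let $P_n$ be the path on $n$ vertices. Then $$v(P_n)=\begin{cases}\lfloor n/4\rfloor & \text{if } n\equiv 0,1 \pmod 4,\\ \lfloor n/4\rfloor+1 & \text{if } n\equiv 2,3 \pmod 4.\end{cases}$$
   Context: Let $K$ be a field and $S=K[x_1,\dots,x_t]$ with the standard grading. For a proper graded ideal $I\subset S$, $\operatorname{Ass}(I)$ is the set of associated primes of $S/I$, and the $v$-number of $I$ is $v(I)=\min\{k\ge 0 : \exists f\in S_k \text{ and } \mathcal P\in\operatorname{Ass}(I) \text{ with } (I:f)=\mathcal P\}$. For a finite simple graph $G$ on vertex set $\{x_1,\dots,x_t\}$, the edge ideal is $I(G)=\langle x_ix_j : \{x_i,x_j\}\text{ an edge of } G\rangle\subset S$, and $v(G):=v(I(G))$. The path $P_n$ has vertices $x_1,\dots,x_n$ and edges $\{x_i,x_{i+1}\}$ for $1\le i\le n-1$. $\lfloor\cdot\rfloor$ is the integer part. *)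

theory Defs
  imports Main "HOL-Library.Poly_Mapping"
begin

text \<open>Polynomials in countably many variables x_0, x_1, ... over a field 'a:
  maps from monomials (finitely supported exponent vectors) to coefficients.
  The ring S = K[x_1,...,x_t] is the subring of those polynomials involving only x_1..x_t.\<close>

type_synonym 'a mpol = "(nat \<Rightarrow>\<^sub>0 nat) \<Rightarrow>\<^sub>0 'a"

definition var :: "nat \<Rightarrow> 'a::comm_ring_1 mpol" where
  "var i = Poly_Mapping.single (Poly_Mapping.single i 1) 1"

definition polyring :: "nat \<Rightarrow> 'a::field mpol set" where
  "polyring t = {p :: 'a mpol. \<forall>m \<in> Poly_Mapping.keys p. Poly_Mapping.keys m \<subseteq> {1..t}}"

definition mdeg :: "(nat \<Rightarrow>\<^sub>0 nat) \<Rightarrow> nat" where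
  "mdeg m = (\<Sum>i\<in>Poly_Mapping.keys m. Poly_Mapping.lookup m i)"

definition homog_deg :: "nat \<Rightarrow> nat \<Rightarrow> 'a::field mpol set" where
  "homog_deg t k = {p \<in> polyring t. \<forall>m \<in> Poly_Mapping.keys p. mdeg m = k}"

definition ideal_gen :: "nat \<Rightarrow> 'a::field mpol set \<Rightarrow> 'a mpol set" where
  "ideal_gen t G = {p. \<exists>F c. finite F \<and> F \<subseteq> G \<and> (\<forall>g\<in>F. c g \<in> polyring t)
                          \<and> p = (\<Sum>g\<in>F. c g * g)}"

definition is_ideal :: "nat \<Rightarrow> 'a::field mpol set \<Rightarrow> bool" where
  "is_ideal t I \<longleftrightarrow> I \<subseteq> polyring t \<and> 0 \<in> I \<and> (\<forall>f\<in>I. \<forall>g\<in>I. f + g \<in> I)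
      \<and> (\<forall>f\<in>I. \<forall>r\<in>polyring t. r * f \<in> I)"

definition is_prime_ideal :: "nat \<Rightarrow> 'a::field mpol set \<Rightarrow> bool" where
  "is_prime_ideal t P \<longleftrightarrow> is_ideal t P \<and> 1 \<notin> P
      \<and> (\<forall>f\<in>polyring t. \<forall>g\<in>polyring t. f * g \<in> P \<longrightarrow> f \<in> P \<or> g \<in> P)"

definition colon :: "nat \<Rightarrow> 'a::field mpol set \<Rightarrow> 'a mpol \<Rightarrow> 'a mpol set" where
  "colon t I f = {g \<in> polyring t. g * f \<in> I}"

definition Ass :: "nat \<Rightarrow> 'a::field mpol set \<Rightarrow> 'a mpol set set" where
  "Ass t I = {P. is_prime_ideal t P \<and> (\<exists>f\<in>polyring t. colon t I f = P)}"

definition v_number :: "nat \<Rightarrow> 'a::field mpol set \<Rightarrow> nat" where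
  "v_number t I = (LEAST k. \<exists>f \<in> homog_deg t k. \<exists>P \<in> Ass t I. colon t I f = P)"

definition path_edge_ideal :: "nat \<Rightarrow> 'a::field mpol set" where
  "path_edge_ideal n = ideal_gen n {var i * var (i+1) | i. 1 \<le> i \<and> i \<le> n - 1}"

end

theory Submission
  imports Defs
begin

lemma lookup_mult_single:
  fixes p :: "('k::cancel_comm_monoid_add \<Rightarrow>\<^sub>0 'b::comm_semiring_1)"
  shows "Poly_Mapping.lookup (p * Poly_Mapping.single k c) (m + k) = Poly_Mapping.lookup p m * c"
proof -
  have "Poly_Mapping.lookup (p * Poly_Mapping.single k c) (m + k)
      = (\<Sum>l. Poly_Mapping.lookup p l * (\<Sum>q. (c when k = q) when m + k = l + q))"
    by (simp only: lookup_mult lookup_single)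
  also have "\<dots> = (\<Sum>l. Poly_Mapping.lookup p l * (c when m + k = l + k))"
  proof -
    have "(\<Sum>q. (c when k = q) when m + k = l + q) = (c when m + k = l + k)" for l
      by (subst when_commute) (rule Sum_any_when_equal')
    then show ?thesis by simp
  qed
  also have "\<dots> = (\<Sum>l. (Poly_Mapping.lookup p l * c when l = m))"
    by (simp add: mult_when)
  also have "\<dots> = Poly_Mapping.lookup p m * c" by simp
  finally show ?thesis .
qed

lemma keys_mult_single1:
  fixes p :: "'a::field mpol"
  shows "Poly_Mapping.keys (p * Poly_Mapping.single k 1) = (\<lambda>m. m + k) ` Poly_Mapping.keys p"
proof
  show "Poly_Mapping.keys (p * Poly_Mapping.single k 1) \<subseteq> (\<lambda>m. m + k) ` Poly_Mapping.keys p"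
    using keys_mult[of p "Poly_Mapping.single k 1"] by auto
  show "(\<lambda>m. m + k) ` Poly_Mapping.keys p \<subseteq> Poly_Mapping.keys (p * Poly_Mapping.single k 1)"
    by (auto simp: in_keys_iff lookup_mult_single)
qed

lemma keys_plus_nat:
  fixes a b :: "nat \<Rightarrow>\<^sub>0 nat"
  shows "Poly_Mapping.keys (a + b) = Poly_Mapping.keys a \<union> Poly_Mapping.keys b"
  by (auto simp: in_keys_iff lookup_add)

lemma sum_singles:
  fixes p :: "'x \<Rightarrow>\<^sub>0 'b::comm_monoid_add"
  shows "p = (\<Sum>m\<in>Poly_Mapping.keys p. Poly_Mapping.single m (Poly_Mapping.lookup p m))"
proof (rule poly_mapping_eqI)
  fix x
  have "Poly_Mapping.lookup (\<Sum>m\<in>Poly_Mapping.keys p. Poly_Mapping.single m (Poly_Mapping.lookup p m)) x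
     = (\<Sum>m\<in>Poly_Mapping.keys p. (Poly_Mapping.lookup p m when m = x))"
    by (simp add: lookup_sum lookup_single)
  also have "\<dots> = Poly_Mapping.lookup p x"
    by (cases "x \<in> Poly_Mapping.keys p") (auto simp: when_def in_keys_iff sum.delta)
  finally show "Poly_Mapping.lookup p x = Poly_Mapping.lookup (\<Sum>m\<in>Poly_Mapping.keys p. Poly_Mapping.single m (Poly_Mapping.lookup p m)) x" by simp
qed

lemma keys_nat_zero[simp]: "Poly_Mapping.keys (0::nat \<Rightarrow>\<^sub>0 nat) = {}" by simp

definition dv :: "nat \<Rightarrow> (nat \<Rightarrow>\<^sub>0 nat) \<Rightarrow> bool" where
  "dv n m \<longleftrightarrow> (\<exists>j. 1 \<le> j \<and> j + 1 \<le> n \<and> 0 < Poly_Mapping.lookup m j \<and> 0 < Poly_Mapping.lookup m (j+1))"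

definition Mset :: "nat \<Rightarrow> 'a::field mpol set" where
  "Mset n = {p \<in> polyring n. \<forall>m\<in>Poly_Mapping.keys p. dv n m}"

lemma polyring_add: "p \<in> polyring n \<Longrightarrow> q \<in> polyring n \<Longrightarrow> p + q \<in> polyring n"
  unfolding polyring_def using keys_add[of p q] by auto

lemma polyring_uminus: "p \<in> polyring n \<Longrightarrow> - p \<in> polyring n"
  unfolding polyring_def by (simp add: in_keys_iff)

lemma polyring_mult: "p \<in> polyring n \<Longrightarrow> q \<in> polyring n \<Longrightarrow> p * q \<in> polyring n"
  unfolding polyring_def using keys_mult[of p q] by (force simp: keys_plus_nat)

lemma polyring_0: "0 \<in> polyring n" unfolding polyring_def by simp
lemma polyring_1: "1 \<in> polyring n" unfolding polyring_def by simp

lemma polyring_single: "Poly_Mapping.keys m \<subseteq> {1..n} \<Longrightarrow> Poly_Mapping.single m c \<in> polyring n"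
  unfolding polyring_def by simp

lemma var_polyring: "1 \<le> i \<Longrightarrow> i \<le> n \<Longrightarrow> (var i :: 'a::field mpol) \<in> polyring n"
  unfolding var_def by (rule polyring_single) simp

lemma polyring_sum: "(\<And>x. x \<in> X \<Longrightarrow> f x \<in> polyring n) \<Longrightarrow> sum f X \<in> polyring n"
  by (induction X rule: infinite_finite_induct) (auto intro: polyring_add polyring_0)

lemma dv_mono: "dv n b \<Longrightarrow> dv n (a + b)"
  unfolding dv_def by (auto simp: lookup_add)

lemma Mset_add: "p \<in> Mset n \<Longrightarrow> q \<in> Mset n \<Longrightarrow> p + q \<in> Mset n"
  unfolding Mset_def using keys_add[of p q] by (auto intro: polyring_add)

lemma Mset_0: "0 \<in> Mset n" unfolding Mset_def by (simp add: polyring_0)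

lemma Mset_mult: "r \<in> polyring n \<Longrightarrow> p \<in> Mset n \<Longrightarrow> r * p \<in> Mset n"
  unfolding Mset_def using keys_mult[of r p] by (force intro: polyring_mult dv_mono)

lemma Mset_sum: "(\<And>x. x \<in> X \<Longrightarrow> f x \<in> Mset n) \<Longrightarrow> sum f X \<in> Mset n"
  by (induction X rule: infinite_finite_induct) (auto intro: Mset_add Mset_0)

lemma edge_eq: "(var i * var j :: 'a::field mpol) = Poly_Mapping.single (Poly_Mapping.single i 1 + Poly_Mapping.single j 1) 1"
  unfolding var_def by (simp add: mult_single)

lemma edge_Mset: "1 \<le> i \<Longrightarrow> i \<le> n - 1 \<Longrightarrow> (var i * var (i+1) :: 'a::field mpol) \<in> Mset n"
proof -
  assume a: "1 \<le> i" "i \<le> n - 1"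
  have "dv n (Poly_Mapping.single i 1 + Poly_Mapping.single (i+1) 1)"
    unfolding dv_def using a by (intro exI[of _ i]) (auto simp: lookup_add lookup_single)
  moreover have "Poly_Mapping.keys (Poly_Mapping.single i 1 + Poly_Mapping.single (i+1) (1::nat)) \<subseteq> {1..n}"
    using a by (auto simp: keys_plus_nat)
  ultimately show ?thesis unfolding edge_eq Mset_def
    using polyring_single[of _ n 1] by simp
qed

lemma ideal_sub_Mset: "path_edge_ideal n \<subseteq> (Mset n :: 'a::field mpol set)"
proof
  fix p :: "'a mpol" assume "p \<in> path_edge_ideal n"
  then obtain F c where F: "finite F" "F \<subseteq> {var i * var (i+1) | i. 1 \<le> i \<and> i \<le> n - 1}"
    "\<forall>g\<in>F. c g \<in> polyring n" "p = (\<Sum>g\<in>F. c g * g)"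
    unfolding path_edge_ideal_def ideal_gen_def by blast
  show "p \<in> Mset n" unfolding F(4)
  proof (rule Mset_sum)
    fix g assume "g \<in> F"
    then obtain i where i: "g = var i * var (i+1)" "1 \<le> i" "i \<le> n - 1" using F(2) by blast
    show "c g * g \<in> Mset n" using F(3) \<open>g \<in> F\<close> unfolding i(1)
      by (intro Mset_mult edge_Mset i(2,3)) simp
  qed
qed

lemma ideal_gen_0: "0 \<in> ideal_gen n G"
  unfolding ideal_gen_def by (rule CollectI, rule exI[of _ "{}"]) auto

lemma ideal_gen_gen: "r \<in> polyring n \<Longrightarrow> g \<in> G \<Longrightarrow> r * g \<in> ideal_gen n G"
  unfolding ideal_gen_def by (rule CollectI, rule exI[of _ "{g}"], rule exI[of _ "\<lambda>_. r"]) auto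

lemma ideal_gen_add:
  assumes "p \<in> ideal_gen n G" "q \<in> ideal_gen n G" shows "p + q \<in> ideal_gen n G"
proof -
  obtain F1 c1 where 1: "finite F1" "F1 \<subseteq> G" "\<forall>g\<in>F1. c1 g \<in> polyring n" "p = (\<Sum>g\<in>F1. c1 g * g)"
    using assms(1) unfolding ideal_gen_def by blast
  obtain F2 c2 where 2: "finite F2" "F2 \<subseteq> G" "\<forall>g\<in>F2. c2 g \<in> polyring n" "q = (\<Sum>g\<in>F2. c2 g * g)"
    using assms(2) unfolding ideal_gen_def by blast
  define c where "c g = (if g \<in> F1 then c1 g else 0) + (if g \<in> F2 then c2 g else 0)" for g
  have "(\<Sum>g\<in>F1 \<union> F2. c g * g) = (\<Sum>g\<in>F1 \<union> F2. (if g \<in> F1 then c1 g * g else 0))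
      + (\<Sum>g\<in>F1 \<union> F2. (if g \<in> F2 then c2 g * g else 0))"
  proof -
    have "c g * g = (if g \<in> F1 then c1 g * g else 0) + (if g \<in> F2 then c2 g * g else 0)" for g
      unfolding c_def by (simp add: distrib_right)
    then show ?thesis by (simp add: sum.distrib)
  qed
  also have "\<dots> = p + q"
    unfolding 1(4) 2(4) using 1(1) 2(1)
    by (simp add: sum.If_cases Int_absorb1 Int_absorb2)
  finally have e: "p + q = (\<Sum>g\<in>F1 \<union> F2. c g * g)" by simp
  have pc: "\<forall>g\<in>F1 \<union> F2. c g \<in> polyring n"
    using 1(3) 2(3) unfolding c_def by (auto intro!: polyring_add polyring_0)
  show ?thesis unfolding ideal_gen_def mem_Collect_eq
    apply (rule exI[of _ "F1 \<union> F2"], rule exI[of _ c])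
    using 1(1,2) 2(1,2) pc e by auto
qed

lemma ideal_gen_sum: "(\<And>x. x \<in> X \<Longrightarrow> f x \<in> ideal_gen n G) \<Longrightarrow> sum f X \<in> ideal_gen n G"
  by (induction X rule: infinite_finite_induct) (auto intro: ideal_gen_add ideal_gen_0)

lemma single_in_ideal:
  assumes "dv n m" "Poly_Mapping.keys m \<subseteq> {1..n}"
  shows "(Poly_Mapping.single m c :: 'a::field mpol) \<in> path_edge_ideal n"
proof -
  obtain j where j: "1 \<le> j" "j + 1 \<le> n" "0 < Poly_Mapping.lookup m j" "0 < Poly_Mapping.lookup m (j+1)"
    using assms(1) unfolding dv_def by blast
  define e where "e = Poly_Mapping.single j 1 + Poly_Mapping.single (j+1) (1::nat)"
  have me: "m - e + e = m"
    by (rule poly_mapping_eqI) (use j in \<open>auto simp: e_def lookup_add minus_poly_mapping.rep_eq lookup_single when_def\<close>)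
  have k: "Poly_Mapping.keys (m - e) \<subseteq> {1..n}"
    using assms(2) by (auto simp: in_keys_iff minus_poly_mapping.rep_eq)
  have "(Poly_Mapping.single m c :: 'a mpol) = Poly_Mapping.single (m - e) c * (var j * var (j+1))"
    unfolding edge_eq mult_single e_def[symmetric] me by simp
  also have "\<dots> \<in> path_edge_ideal n"
    unfolding path_edge_ideal_def
    by (rule ideal_gen_gen[OF polyring_single[OF k]]) (use j in auto)
  finally show ?thesis .
qed

lemma Mset_sub_ideal: "(Mset n :: 'a::field mpol set) \<subseteq> path_edge_ideal n"
proof
  fix p :: "'a mpol" assume p: "p \<in> Mset n"
  have "(\<Sum>m\<in>Poly_Mapping.keys p. Poly_Mapping.single m (Poly_Mapping.lookup p m)) \<in> path_edge_ideal n"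
    unfolding path_edge_ideal_def
  proof (rule ideal_gen_sum)
    fix m assume "m \<in> Poly_Mapping.keys p"
    then have "dv n m" "Poly_Mapping.keys m \<subseteq> {1..n}" using p unfolding Mset_def polyring_def by auto
    then show "Poly_Mapping.single m (Poly_Mapping.lookup p m) \<in> ideal_gen n {var i * var (i + 1) |i. 1 \<le> i \<and> i \<le> n - 1}"
      using single_in_ideal[folded path_edge_ideal_def] unfolding path_edge_ideal_def by blast
  qed
  then show "p \<in> path_edge_ideal n" using sum_singles[of p] by simp
qed

lemma ideal_eq: "path_edge_ideal n = (Mset n :: 'a::field mpol set)"
  using ideal_sub_Mset Mset_sub_ideal by blast


definition PA :: "nat \<Rightarrow> nat set \<Rightarrow> 'a::field mpol set" where
  "PA n A = {p \<in> polyring n. \<forall>m\<in>Poly_Mapping.keys p. \<exists>i\<in>A. 0 < Poly_Mapping.lookup m i}"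

lemma PA_ideal: "is_ideal n (PA n A :: 'a::field mpol set)"
  unfolding is_ideal_def
proof (intro conjI ballI)
  show "PA n A \<subseteq> polyring n" unfolding PA_def by auto
  show "0 \<in> (PA n A :: 'a mpol set)" unfolding PA_def by (simp add: polyring_0)
  fix f g :: "'a mpol" assume f: "f \<in> PA n A"
  {
    assume g: "g \<in> PA n A"
    show "f + g \<in> PA n A" using f g keys_add[of f g] unfolding PA_def
      by (auto intro: polyring_add)
  }
  {
    assume r: "g \<in> polyring n"
    have "\<exists>i\<in>A. 0 < Poly_Mapping.lookup m i" if m: "m \<in> Poly_Mapping.keys (g * f)" for m
    proof -
      obtain a b where ab: "m = a + b" "b \<in> Poly_Mapping.keys f"
        using m keys_mult[of g f] by blast
      then obtain i where "i \<in> A" "0 < Poly_Mapping.lookup b i" using f unfolding PA_def by blast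
      then show ?thesis unfolding ab(1) by (auto simp: lookup_add)
    qed
    then show "g * f \<in> PA n A" using f r unfolding PA_def
      by (auto intro: polyring_mult)
  }
qed

lemma PA_one: "(1 :: 'a::field mpol) \<notin> PA n A"
  unfolding PA_def by simp

lemma PA_split:
  fixes f :: "'a::field mpol"
  assumes "f \<in> polyring n" "f \<notin> PA n A"
  obtains f1 f2 where "f = f1 + f2" "f1 \<in> PA n A" "f2 \<noteq> 0"
    "\<forall>m\<in>Poly_Mapping.keys f2. \<forall>i\<in>A. Poly_Mapping.lookup m i = 0" "f2 \<in> polyring n"
proof -
  define av where "av m \<longleftrightarrow> (\<forall>i\<in>A. Poly_Mapping.lookup m i = 0)" for m :: "nat \<Rightarrow>\<^sub>0 nat"
  define K where "K = {m \<in> Poly_Mapping.keys f. av m}"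
  define f2 where "f2 = (\<Sum>m\<in>K. Poly_Mapping.single m (Poly_Mapping.lookup f m))"
  have fK: "finite K" unfolding K_def by simp
  have l2: "Poly_Mapping.lookup f2 x = (if x \<in> K then Poly_Mapping.lookup f x else 0)" for x
    unfolding f2_def lookup_sum lookup_single using fK
    by (simp add: when_def sum.delta)
  obtain m0 where m0: "m0 \<in> Poly_Mapping.keys f" "av m0"
    using assms unfolding PA_def av_def by auto
  have "Poly_Mapping.lookup f2 m0 \<noteq> 0" using m0 l2 unfolding K_def by (simp add: in_keys_iff)
  then have nz: "f2 \<noteq> 0" by auto
  have k2: "Poly_Mapping.keys f2 \<subseteq> K" using l2 by (auto simp: in_keys_iff split: if_splits)
  have p2: "f2 \<in> polyring n" using k2 assms(1) unfolding polyring_def K_def by auto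
  have l1: "Poly_Mapping.lookup (f - f2) x = (if x \<in> K then 0 else Poly_Mapping.lookup f x)" for x
    using l2[of x] by (simp add: lookup_minus)
  have p1: "f - f2 \<in> PA n A"
    unfolding PA_def
  proof (intro CollectI conjI ballI)
    show "f - f2 \<in> polyring n" using polyring_add[OF assms(1) polyring_uminus[OF p2]] by simp
    fix m assume "m \<in> Poly_Mapping.keys (f - f2)"
    then have "m \<in> Poly_Mapping.keys f" "\<not> av m" using l1[of m] unfolding K_def
      by (auto simp: in_keys_iff split: if_splits)
    then show "\<exists>i\<in>A. 0 < Poly_Mapping.lookup m i" unfolding av_def by auto
  qed
  show ?thesis
    by (rule that[of "f - f2" f2]) (use p1 nz k2 p2 in \<open>auto simp: K_def av_def\<close>)
qed

lemma PA_prime: "is_prime_ideal n (PA n A :: 'a::field mpol set)"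
  unfolding is_prime_ideal_def
proof (intro conjI ballI impI PA_ideal PA_one)
  fix f g :: "'a mpol"
  assume f: "f \<in> polyring n" and g: "g \<in> polyring n" and fg: "f * g \<in> PA n A"
  show "f \<in> PA n A \<or> g \<in> PA n A"
  proof (rule ccontr)
    assume "\<not> ?thesis"
    then have nf: "f \<notin> PA n A" and ng: "g \<notin> PA n A" by auto
    obtain f1 f2 where F: "f = f1 + f2" "f1 \<in> PA n A" "f2 \<noteq> 0"
      "\<forall>m\<in>Poly_Mapping.keys f2. \<forall>i\<in>A. Poly_Mapping.lookup m i = 0" "f2 \<in> polyring n"
      using PA_split[OF f nf] by blast
    obtain g1 g2 where G: "g = g1 + g2" "g1 \<in> PA n A" "g2 \<noteq> 0"
      "\<forall>m\<in>Poly_Mapping.keys g2. \<forall>i\<in>A. Poly_Mapping.lookup m i = 0" "g2 \<in> polyring n"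
      using PA_split[OF g ng] by blast
    have I: "is_ideal n (PA n A :: 'a mpol set)" by (rule PA_ideal)
    have "g * f1 \<in> PA n A" using I F(2) g unfolding is_ideal_def by blast
    moreover have "f2 * g1 \<in> PA n A" using I G(2) F(5) unfolding is_ideal_def by blast
    ultimately have "f * g + (-1) * (g * f1 + f2 * g1) \<in> PA n A"
      using I fg polyring_uminus[OF polyring_1] unfolding is_ideal_def by blast
    moreover have "f * g + (-1) * (g * f1 + f2 * g1) = f2 * g2"
      unfolding F(1) G(1) by (simp add: algebra_simps)
    ultimately have in2: "f2 * g2 \<in> PA n A" by simp
    have "f2 * g2 \<noteq> 0" using F(3) G(3) by simp
    then obtain m where m: "m \<in> Poly_Mapping.keys (f2 * g2)" by fastforce
    then obtain a b where ab: "m = a + b" "a \<in> Poly_Mapping.keys f2" "b \<in> Poly_Mapping.keys g2"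
      using keys_mult[of f2 g2] by blast
    have "\<forall>i\<in>A. Poly_Mapping.lookup m i = 0" using ab F(4) G(4) by (simp add: lookup_add)
    then show False using in2 m unfolding PA_def by fastforce
  qed
qed


lemma card_keys_le_mdeg: "card (Poly_Mapping.keys m) \<le> mdeg m"
proof -
  have "card (Poly_Mapping.keys m) = (\<Sum>i\<in>Poly_Mapping.keys m. (1::nat))" by simp
  also have "\<dots> \<le> (\<Sum>i\<in>Poly_Mapping.keys m. Poly_Mapping.lookup m i)"
    by (rule sum_mono) (auto simp: in_keys_iff)
  finally show ?thesis unfolding mdeg_def .
qed

lemma counting:
  assumes "finite T" "\<And>j. 1 \<le> j \<Longrightarrow> j + 1 \<le> n \<Longrightarrow> \<exists>s\<in>T. j \<le> s + 1 \<and> s \<le> j + 2"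
  shows "n - 1 \<le> 4 * card T"
proof -
  have sub: "{1..n-1} \<subseteq> (\<Union>s\<in>T. {s-2..s+1})"
  proof
    fix j assume "j \<in> {1..n-1}"
    then have "1 \<le> j" "j + 1 \<le> n" by auto
    then obtain s where "s \<in> T" "j \<le> s + 1" "s \<le> j + 2" using assms(2)[of j] by blast
    then show "j \<in> (\<Union>s\<in>T. {s-2..s+1})" by (intro UN_I[of s]) auto
  qed
  have "n - 1 = card {1..n-1}" by simp
  also have "\<dots> \<le> card (\<Union>s\<in>T. {s-2..s+1})"
    by (rule card_mono[OF _ sub]) (use assms(1) in auto)
  also have "\<dots> \<le> (\<Sum>s\<in>T. card {s-2..s+1})" by (rule card_UN_le[OF assms(1)])
  also have "\<dots> \<le> (\<Sum>s\<in>T. 4)" by (rule sum_mono) simp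
  also have "\<dots> = 4 * card T" by simp
  finally show ?thesis .
qed

lemma var_mult_Mset_key:
  fixes f :: "'a::field mpol"
  assumes "f * var i \<in> Mset n" "m \<in> Poly_Mapping.keys f" "\<not> dv n m"
  shows "\<exists>s\<in>Poly_Mapping.keys m. s = i + 1 \<or> i = s + 1"
proof -
  have "m + Poly_Mapping.single i 1 \<in> Poly_Mapping.keys (f * var i)"
    unfolding var_def keys_mult_single1 using assms(2) by auto
  then have "dv n (m + Poly_Mapping.single i 1)" using assms(1) unfolding Mset_def by auto
  then obtain j where j: "1 \<le> j" "j + 1 \<le> n" "0 < Poly_Mapping.lookup m j + (1 when i = j)"
    "0 < Poly_Mapping.lookup m (j+1) + (1 when i = j + 1)"
    unfolding dv_def by (auto simp: lookup_add lookup_single)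
  show ?thesis
  proof (cases "i = j")
    case True
    then have "0 < Poly_Mapping.lookup m (j+1)" using j(4) by simp
    then show ?thesis using True by (auto simp: in_keys_iff)
  next
    case False
    then have "0 < Poly_Mapping.lookup m j" using j(3) by simp
    moreover have "i = j + 1"
    proof (rule ccontr)
      assume "i \<noteq> j + 1"
      then have "0 < Poly_Mapping.lookup m (j+1)" using j(4) by simp
      then show False using assms(3) j(1,2) \<open>0 < Poly_Mapping.lookup m j\<close> unfolding dv_def by blast
    qed
    ultimately show ?thesis by (auto simp: in_keys_iff)
  qed
qed

lemma lower_bound:
  fixes f :: "'a::field mpol"
  assumes f: "f \<in> homog_deg n k" and P: "P \<in> Ass n (path_edge_ideal n)"
    and c: "colon n (path_edge_ideal n) f = P"
  shows "n - 1 \<le> 4 * k"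
proof -
  have pr: "is_prime_ideal n P" using P unfolding Ass_def by auto
  have fp: "f \<in> polyring n" using f unfolding homog_deg_def by auto
  have C: "g \<in> P \<longleftrightarrow> g \<in> polyring n \<and> g * f \<in> Mset n" for g
    using c unfolding colon_def ideal_eq by auto
  have "f \<notin> Mset n"
  proof
    assume "f \<in> Mset n"
    then have "1 \<in> P" using C[of 1] polyring_1 by simp
    then show False using pr unfolding is_prime_ideal_def by simp
  qed
  then obtain m where m: "m \<in> Poly_Mapping.keys f" "\<not> dv n m" using fp unfolding Mset_def by auto
  have md: "mdeg m = k" using f m(1) unfolding homog_deg_def by auto
  have vi: "\<exists>s\<in>Poly_Mapping.keys m. s = i + 1 \<or> i = s + 1" if "var i \<in> P" for i
    using var_mult_Mset_key[OF _ m] C[of "var i"] that by (simp add: mult.commute)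
  have cov: "\<exists>s\<in>Poly_Mapping.keys m. j \<le> s + 1 \<and> s \<le> j + 2" if j: "1 \<le> j" "j + 1 \<le> n" for j
  proof -
    have "(var j * var (j+1) :: 'a mpol) \<in> Mset n" using j by (intro edge_Mset) auto
    then have "f * (var j * var (j+1)) \<in> Mset n" by (rule Mset_mult[OF fp])
    moreover have "(var j * var (j+1) :: 'a mpol) \<in> polyring n"
      using j by (intro polyring_mult var_polyring) auto
    ultimately have "var j * var (j+1) \<in> P" using C by (simp add: mult.commute)
    moreover have "(var j :: 'a mpol) \<in> polyring n" "(var (j+1) :: 'a mpol) \<in> polyring n"
      using j by (auto intro: var_polyring)
    ultimately have "var j \<in> P \<or> var (j+1) \<in> P" using pr unfolding is_prime_ideal_def by blast
    then show ?thesis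
    proof
      assume "var j \<in> P"
      then obtain s where "s \<in> Poly_Mapping.keys m" "s = j + 1 \<or> j = s + 1" using vi by blast
      then show ?thesis by (intro bexI[of _ s]) auto
    next
      assume "var (j+1) \<in> P"
      then obtain s where "s \<in> Poly_Mapping.keys m" "s = j + 1 + 1 \<or> j + 1 = s + 1" using vi by blast
      then show ?thesis by (intro bexI[of _ s]) auto
    qed
  qed
  have "n - 1 \<le> 4 * card (Poly_Mapping.keys m)" by (rule counting) (use cov in auto)
  also have "\<dots> \<le> 4 * k" using card_keys_le_mdeg[of m] md by simp
  finally show ?thesis .
qed


definition Sset :: "nat \<Rightarrow> nat set" where
  "Sset n = {s \<in> {1..n}. s mod 4 = 3 \<or> (s = n \<and> n mod 4 = 2)}"

definition Aset :: "nat \<Rightarrow> nat set" where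
  "Aset n = {i \<in> {1..n}. \<exists>s\<in>Sset n. s = i + 1 \<or> i = s + 1}"

definition eS :: "nat \<Rightarrow> (nat \<Rightarrow>\<^sub>0 nat)" where
  "eS n = (\<Sum>s\<in>Sset n. Poly_Mapping.single s 1)"

lemma Sset_cover:
  assumes j: "1 \<le> j" "j + 1 \<le> n" shows "\<exists>s\<in>Sset n. j \<le> s + 1 \<and> s \<le> j + 2"
proof -
  have "j mod 4 < 4" by simp
  then consider "j mod 4 = 0" | "j mod 4 = 1" | "j mod 4 = 2" | "j mod 4 = 3" by linarith
  then show ?thesis
  proof cases
    case 1
    then obtain q where q: "j = 4 * q" by auto
    then have "j - 1 = 4 * (q - 1) + 3" using j(1) by simp
    then have "(j - 1) mod 4 = 3" by simp
    then show ?thesis using j by (intro bexI[of _ "j - 1"]) (auto simp: Sset_def)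
  next
    case 2
    show ?thesis
    proof (cases "j + 2 \<le> n")
      case True
      have "(j + 2) mod 4 = 3" using 2 mod_add_left_eq[of j 4 2] by simp
      then show ?thesis using j True by (intro bexI[of _ "j + 2"]) (auto simp: Sset_def)
    next
      case False
      then have "n = j + 1" using j by simp
      moreover have "(j + 1) mod 4 = 2" using 2 mod_add_left_eq[of j 4 1] by simp
      ultimately show ?thesis using j by (intro bexI[of _ "n"]) (auto simp: Sset_def)
    qed
  next
    case 3
    then have "(j + 1) mod 4 = 3" using mod_add_left_eq[of j 4 1] by simp
    then show ?thesis using j by (intro bexI[of _ "j + 1"]) (auto simp: Sset_def)
  next
    case 4
    then show ?thesis using j by (intro bexI[of _ "j"]) (auto simp: Sset_def)
  qed
qed

lemma Sset_indep: "s \<in> Sset n \<Longrightarrow> s + 1 \<notin> Sset n"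
proof
  assume a: "s \<in> Sset n" "s + 1 \<in> Sset n"
  then have le: "s + 1 \<le> n" unfolding Sset_def by auto
  then have "s mod 4 = 3" using a(1) unfolding Sset_def by auto
  then have "(s + 1) mod 4 = 0" using mod_add_left_eq[of s 4 1] by simp
  then show False using a(2) le unfolding Sset_def by auto
qed

lemma Aset_cover:
  assumes "1 \<le> j" "j + 1 \<le> n" shows "j \<in> Aset n \<or> j + 1 \<in> Aset n"
proof -
  obtain s where s: "s \<in> Sset n" "j \<le> s + 1" "s \<le> j + 2" using Sset_cover[OF assms] by blast
  have "(j = s + 1 \<or> s = j + 1) \<or> (j + 1 = s + 1 \<or> s = j + 1 + 1)" using s(2,3) by arith
  then show ?thesis
  proof
    assume "j = s + 1 \<or> s = j + 1"
    then have "j \<in> Aset n" using s(1) assms unfolding Aset_def by auto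
    then show ?thesis ..
  next
    assume "j + 1 = s + 1 \<or> s = j + 1 + 1"
    then have "j + 1 \<in> Aset n" using s(1) assms unfolding Aset_def by auto
    then show ?thesis ..
  qed
qed

lemma card_Sset: "card (Sset n) = (if n mod 4 = 0 \<or> n mod 4 = 1 then n div 4 else n div 4 + 1)"
proof -
  define S3 where "S3 = {s \<in> {1..n}. s mod 4 = (3::nat)}"
  have S3: "S3 = (\<lambda>j. 4 * j + 3) ` {..<(n+1) div 4}"
  proof
    show "S3 \<subseteq> (\<lambda>j. 4 * j + 3) ` {..<(n+1) div 4}"
    proof
      fix x assume "x \<in> S3"
      then have "x mod 4 = 3" "x \<le> n" unfolding S3_def by auto
      have "x = 4 * (x div 4) + 3" using \<open>x mod 4 = 3\<close> div_mult_mod_eq[of x 4] by linarith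
      moreover have "x div 4 < (n+1) div 4"
      proof -
        have "x + 1 = 4 * (x div 4 + 1)" using \<open>x = 4 * (x div 4) + 3\<close> by simp
        then have "(x+1) div 4 = x div 4 + 1" by simp
        moreover have "(x+1) div 4 \<le> (n+1) div 4" using \<open>x \<le> n\<close> by (intro div_le_mono) simp
        ultimately show ?thesis by simp
      qed
      ultimately show "x \<in> (\<lambda>j. 4 * j + 3) ` {..<(n+1) div 4}" by (intro image_eqI[of _ _ "x div 4"]) auto
    qed
    show "(\<lambda>j. 4 * j + 3) ` {..<(n+1) div 4} \<subseteq> S3"
    proof
      fix x assume "x \<in> (\<lambda>j. 4 * j + 3) ` {..<(n+1) div 4}"
      then obtain j where x: "x = 4 * j + 3" "j + 1 \<le> (n+1) div 4" by auto
      have "4 * ((n+1) div 4) \<le> n + 1" using div_mult_mod_eq[of "n+1" 4] by linarith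
      then have "x \<le> n" using x by linarith
      moreover have "x mod 4 = 3" unfolding x(1) by simp
      ultimately show "x \<in> S3" unfolding S3_def by auto
    qed
  qed
  have cS3: "card S3 = (n+1) div 4" unfolding S3 by (subst card_image) (auto simp: inj_on_def)
  have "Sset n = S3 \<union> (if n mod 4 = 2 then {n} else {})"
    unfolding Sset_def S3_def by (cases "n = 0") auto
  moreover have "n mod 4 = 2 \<Longrightarrow> n \<notin> S3" unfolding S3_def by auto
  moreover have "finite S3" unfolding S3_def by auto
  ultimately have "card (Sset n) = card S3 + (if n mod 4 = 2 then 1 else 0)"
    by (cases "n mod 4 = 2") auto
  moreover have "(n+1) div 4 + (if n mod 4 = 2 then 1 else 0) = (if n mod 4 = 0 \<or> n mod 4 = 1 then n div 4 else n div 4 + (1::nat))"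
    by presburger
  ultimately show ?thesis unfolding cS3 by simp
qed

lemma finite_Sset: "finite (Sset n)" unfolding Sset_def by auto

lemma lookup_eS: "Poly_Mapping.lookup (eS n) x = (if x \<in> Sset n then 1 else 0)"
  unfolding eS_def lookup_sum lookup_single using finite_Sset[of n]
  by (simp add: when_def sum.delta)

lemma keys_eS: "Poly_Mapping.keys (eS n) = Sset n"
  by (auto simp: in_keys_iff lookup_eS split: if_splits)

lemma mdeg_eS: "mdeg (eS n) = card (Sset n)"
  unfolding mdeg_def keys_eS by (simp add: lookup_eS)

lemma dv_eS: "dv n (m + eS n) \<longleftrightarrow> (\<exists>i\<in>Aset n. 0 < Poly_Mapping.lookup m i)"
proof
  assume "dv n (m + eS n)"
  then obtain j where j: "1 \<le> j" "j + 1 \<le> n"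
    "0 < Poly_Mapping.lookup m j + (if j \<in> Sset n then 1 else 0)"
    "0 < Poly_Mapping.lookup m (j+1) + (if j + 1 \<in> Sset n then 1 else 0)"
    unfolding dv_def by (auto simp: lookup_add lookup_eS)
  show "\<exists>i\<in>Aset n. 0 < Poly_Mapping.lookup m i"
  proof (cases "j \<in> Sset n")
    case True
    then have "j + 1 \<notin> Sset n" by (rule Sset_indep)
    then have "0 < Poly_Mapping.lookup m (j+1)" using j(4) by simp
    moreover have "j + 1 \<in> Aset n" unfolding Aset_def using True j by auto
    ultimately show ?thesis by blast
  next
    case False
    then have mj: "0 < Poly_Mapping.lookup m j" using j(3) by simp
    show ?thesis
    proof (cases "j + 1 \<in> Sset n")
      case True
      then have "j \<in> Aset n" unfolding Aset_def using j by auto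
      then show ?thesis using mj by blast
    next
      case False
      then have "0 < Poly_Mapping.lookup m (j+1)" using j(4) by simp
      then show ?thesis using mj Aset_cover[OF j(1,2)] by blast
    qed
  qed
next
  assume "\<exists>i\<in>Aset n. 0 < Poly_Mapping.lookup m i"
  then obtain i s where i: "1 \<le> i" "i \<le> n" "s \<in> Sset n" "s = i + 1 \<or> i = s + 1"
    "0 < Poly_Mapping.lookup m i"
    unfolding Aset_def by auto
  have s1: "1 \<le> s" "s \<le> n" using i(3) unfolding Sset_def by auto
  show "dv n (m + eS n)"
    unfolding dv_def
  proof (cases "s = i + 1")
    case True
    then show "\<exists>j\<ge>1. j + 1 \<le> n \<and> 0 < Poly_Mapping.lookup (m + eS n) j \<and> 0 < Poly_Mapping.lookup (m + eS n) (j + 1)"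
      using i s1 by (intro exI[of _ i]) (auto simp: lookup_add lookup_eS)
  next
    case False
    then have "i = s + 1" using i(4) by simp
    then show "\<exists>j\<ge>1. j + 1 \<le> n \<and> 0 < Poly_Mapping.lookup (m + eS n) j \<and> 0 < Poly_Mapping.lookup (m + eS n) (j + 1)"
      using i s1 by (intro exI[of _ s]) (auto simp: lookup_add lookup_eS)
  qed
qed

lemma f0_polyring: "(Poly_Mapping.single (eS n) 1 :: 'a::field mpol) \<in> polyring n"
  by (rule polyring_single) (auto simp: keys_eS Sset_def)

lemma f0_homog: "(Poly_Mapping.single (eS n) 1 :: 'a::field mpol) \<in> homog_deg n (card (Sset n))"
  unfolding homog_deg_def using f0_polyring by (simp add: mdeg_eS)

lemma colon_f0: "colon n (path_edge_ideal n) (Poly_Mapping.single (eS n) 1 :: 'a::field mpol) = PA n (Aset n)"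
proof -
  have "g * Poly_Mapping.single (eS n) 1 \<in> Mset n \<longleftrightarrow> (\<forall>m\<in>Poly_Mapping.keys g. \<exists>i\<in>Aset n. 0 < Poly_Mapping.lookup m i)"
    if g: "g \<in> polyring n" for g :: "'a mpol"
  proof -
    have "g * Poly_Mapping.single (eS n) 1 \<in> Mset n \<longleftrightarrow> (\<forall>m\<in>Poly_Mapping.keys g. dv n (m + eS n))"
    proof -
      have K: "Poly_Mapping.keys (g * Poly_Mapping.single (eS n) 1) = (\<lambda>m. m + eS n) ` Poly_Mapping.keys g"
        by (rule keys_mult_single1)
      show ?thesis using polyring_mult[OF g f0_polyring] unfolding Mset_def by (auto simp: K)
    qed
    then show ?thesis by (simp add: dv_eS)
  qed
  then show ?thesis unfolding colon_def ideal_eq PA_def by auto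
qed

lemma upper:
  "\<exists>f \<in> homog_deg n (card (Sset n)). \<exists>P \<in> Ass n (path_edge_ideal n :: 'a::field mpol set).
     colon n (path_edge_ideal n) f = P"
proof (intro bexI)
  show "colon n (path_edge_ideal n) (Poly_Mapping.single (eS n) 1 :: 'a mpol) = PA n (Aset n)"
    by (rule colon_f0)
  show "PA n (Aset n) \<in> Ass n (path_edge_ideal n :: 'a mpol set)"
    unfolding Ass_def using PA_prime colon_f0 f0_polyring by blast
  show "(Poly_Mapping.single (eS n) 1 :: 'a mpol) \<in> homog_deg n (card (Sset n))" by (rule f0_homog)
qed

theorem theorem3p1:
  fixes n :: nat
  assumes "n \<ge> 1"
  shows "v_number n (path_edge_ideal n :: 'a::field mpol set) =
           (if n mod 4 = 0 \<or> n mod 4 = 1 then n div 4 else n div 4 + 1)"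
  unfolding v_number_def
proof (rule Least_equality)
  show "\<exists>f \<in> homog_deg n (if n mod 4 = 0 \<or> n mod 4 = 1 then n div 4 else n div 4 + 1).
     \<exists>P \<in> Ass n (path_edge_ideal n :: 'a::field mpol set). colon n (path_edge_ideal n) f = P"
    using upper[of n] unfolding card_Sset .
  fix k assume "\<exists>f \<in> homog_deg n k. \<exists>P \<in> Ass n (path_edge_ideal n :: 'a::field mpol set). colon n (path_edge_ideal n) f = P"
  then have "n - 1 \<le> 4 * k" using lower_bound by blast
  have key: "\<And>q r. 4 * q + r - 1 \<le> 4 * k \<Longrightarrow> r < 4 \<Longrightarrow> 1 \<le> 4 * q + r \<Longrightarrow>
      (if r = 0 \<or> r = 1 then q else q + 1) \<le> k"
  proof -
    fix q r :: nat
    assume a: "4 * q + r - 1 \<le> 4 * k" "r < 4" "1 \<le> 4 * q + r"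
    have "r = 0 \<or> r = 1 \<or> r = 2 \<or> r = 3" using a(2) by arith
    then show "(if r = 0 \<or> r = 1 then q else q + 1) \<le> k"
    proof (elim disjE)
      assume "r = 0" then show ?thesis using a(1,3) by (simp, (arith)?)
    next
      assume "r = 1" then show ?thesis using a(1,3) by (simp, (arith)?)
    next
      assume "r = 2" then show ?thesis using a(1,3) by (simp, (arith)?)
    next
      assume "r = 3" then show ?thesis using a(1,3) by (simp, (arith)?)
    qed
  qed
  have "n = 4 * (n div 4) + n mod 4" by simp
  then show "(if n mod 4 = 0 \<or> n mod 4 = 1 then n div 4 else n div 4 + 1) \<le> k"
    using key[of "n div 4" "n mod 4"] \<open>n - 1 \<le> 4 * k\<close> assms by simp
qed

end
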